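(* Consider a Galton–Watson branching process with offspring distribution $D=\{c_i\}_{i=0}^d$ and branching factor $b>1$, each node holding an answer independently with probability $1/n$, and let $\lambda_i=\phi_{i-1}-\phi_i$ as defined in the context. Then there exist levels $1\le \ell^1\le \ell^*$ such that: (1) $\{\lambda_i\}$ is single-peaked, peaking at $\ell^*$: for all $i\le \ell^*$, $\lambda_{i-1}\le\lambda_i$, and for all $j\ge\ell^*$, $\lambda_j>\lambda_{j+1}$; (2) there exists a constant $\rho>1$ such that $\lambda_{i+1}\ge\rho\,\lambda_i$ for all $i<\ell^1$; (3) $\lambda_{\ell^1}=\Omega(1)$, and consequently $\ell^*-\ell^1=O(1)$; (4) there exists a constant $\gamma>1$ such that $\sum_{j\ge i}\lambda_j\le\gamma\,\lambda_i$ for all $i\ge\ell^*+2$.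
   Context: Branching process: starting from the root (level $0$) of an infinite $d$-ary tree, each node independently samples a number of children $C(v)\sim D$ (where $c_i$ is the probability of $i$ children) and connects to $C(v)$ of its $d$ children chosen uniformly at random; $b=\sum_i ic_i$. Each non-root node independently holds an answer with probability $p=1/n$. Let $t(x)=\sum_{j=0}^d c_j x^j(1-\frac1n)^j$, $\phi_0=1$ and $\phi_i=t(\phi_{i-1})$ for $i\ge1$; $\phi_i$ is the probability that no active node in levels $1,\dots,i$ holds an answer, and $\lambda_i=\phi_{i-1}-\phi_i$ ($i\ge1$) is the probability that the first (lowest-level) answer lies at level $i$. The offspring distribution (hence $b$ and $d$) is fixed while $n$ is allowed to grow; "constant", $\Omega(1)$ and $O(1)$ mean bounds independent of $n$. *)

theory Defs
  imports "HOL-Analysis.Analysis"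
begin

text \<open>Offspring distribution: c i = probability of i children, i = 0..d.
  Answer probability p = 1/n.\<close>

definition branching :: "nat \<Rightarrow> (nat \<Rightarrow> real) \<Rightarrow> real" where
  "branching d c = (\<Sum>i\<le>d. real i * c i)"

definition tfun :: "nat \<Rightarrow> (nat \<Rightarrow> real) \<Rightarrow> nat \<Rightarrow> real \<Rightarrow> real" where
  "tfun d c n x = (\<Sum>j\<le>d. c j * x ^ j * (1 - 1 / real n) ^ j)"

definition phi :: "nat \<Rightarrow> (nat \<Rightarrow> real) \<Rightarrow> nat \<Rightarrow> nat \<Rightarrow> real" where
  "phi d c n i = (tfun d c n ^^ i) 1"

text \<open>lambda_i = phi_(i-1) - phi_i, meaningful for i >= 1 (at i = 0 it evaluates to 0).\<close>
definition lam :: "nat \<Rightarrow> (nat \<Rightarrow> real) \<Rightarrow> nat \<Rightarrow> nat \<Rightarrow> real" where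
  "lam d c n i = phi d c n (i - 1) - phi d c n i"

end

theory Submission
  imports Defs
begin

definition sl :: "nat \<Rightarrow> (nat \<Rightarrow> real) \<Rightarrow> real \<Rightarrow> real \<Rightarrow> real \<Rightarrow> real" where
  "sl d c q a b = (\<Sum>j\<le>d. c j * q^j * (\<Sum>i<j. a^(j - Suc i) * b^i))"

locale gw =
  fixes d :: nat and c :: "nat \<Rightarrow> real" and n :: nat and j0 :: nat
  assumes nonneg: "\<forall>i\<le>d. c i \<ge> 0"
    and distr: "(\<Sum>i\<le>d. c i) = 1"
    and j0: "2 \<le> j0" "j0 \<le> d" "c j0 > 0"
    and n2: "n \<ge> 2"
begin

definition "q = 1 - 1 / real n"
abbreviation "t \<equiv> tfun d c n"
abbreviation "ph \<equiv> phi d c n"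
abbreviation "la \<equiv> lam d c n"
abbreviation "S \<equiv> sl d c q"

lemma q_bounds: "1/2 \<le> q" "q < 1" "0 < q"
proof -
  have "real n \<ge> 2" using n2 by simp
  then have "1 / real n \<le> 1/2" by (simp add: field_simps)
  moreover have "1 / real n > 0" using n2 by simp
  ultimately show "1/2 \<le> q" "q < 1" "0 < q" unfolding q_def by auto
qed

lemma t_def': "t x = (\<Sum>j\<le>d. c j * x ^ j * q ^ j)"
  unfolding tfun_def q_def by simp

lemma t_nonneg: "0 \<le> x \<Longrightarrow> 0 \<le> t x"
  unfolding t_def' using nonneg q_bounds by (intro sum_nonneg) auto

lemma t_le1: assumes "0 \<le> x" "x \<le> 1" shows "t x \<le> 1"
proof -
  have "t x \<le> (\<Sum>j\<le>d. c j)" unfolding t_def'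
  proof (rule sum_mono)
    fix j assume "j \<in> {..d}"
    then have cj: "c j \<ge> 0" using nonneg by auto
    have "x^j * q^j \<le> 1 * 1" using assms q_bounds
      by (intro mult_mono power_le_one) auto
    then show "c j * x ^ j * q ^ j \<le> c j" using cj
      by (metis mult.assoc mult_left_mono mult.right_neutral)
  qed
  then show ?thesis using distr by simp
qed

lemma t_pos: assumes "0 < x" shows "0 < t x"
proof -
  have "c j0 * x ^ j0 * q ^ j0 \<le> t x" unfolding t_def'
    using j0 nonneg q_bounds assms
    by (intro member_le_sum) auto
  moreover have "0 < c j0 * x ^ j0 * q ^ j0" using j0 assms q_bounds by auto
  ultimately show ?thesis by linarith
qed

lemma t1_lt1: "t 1 < 1"
proof -
  have "(\<Sum>j\<le>d. c j) - t 1 = (\<Sum>j\<le>d. c j * (1 - q^j))"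
    unfolding t_def' by (simp add: sum_subtractf algebra_simps)
  also have "\<dots> \<ge> c j0 * (1 - q^j0)"
    using j0 nonneg q_bounds
    by (intro member_le_sum) (auto intro!: mult_nonneg_nonneg simp: power_le_one)
  finally have "(\<Sum>j\<le>d. c j) - t 1 \<ge> c j0 * (1 - q^j0)" .
  moreover have "c j0 * (1 - q^j0) > 0" using j0 q_bounds
    by (simp add: power_less_one_iff)
  ultimately show ?thesis using distr by linarith
qed

lemma slope: "t y - t x = S x y * (y - x)"
proof -
  have "t y - t x = (\<Sum>j\<le>d. c j * q^j * (y^j - x^j))"
    unfolding t_def' by (simp add: sum_subtractf algebra_simps)
  also have "\<dots> = (\<Sum>j\<le>d. c j * q^j * ((y - x) * (\<Sum>i<j. x^(j - Suc i) * y^i)))"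
    by (simp add: power_diff_sumr2)
  also have "\<dots> = (\<Sum>j\<le>d. c j * q^j * (\<Sum>i<j. x^(j - Suc i) * y^i) * (y - x))"
    by (simp add: mult_ac)
  also have "\<dots> = S x y * (y - x)"
    unfolding sl_def by (simp add: sum_distrib_right)
  finally show ?thesis .
qed

lemma S_mono: assumes "0 \<le> a'" "a' \<le> a" "0 \<le> b'" "b' \<le> b"
  shows "S a' b' \<le> S a b"
  unfolding sl_def
proof (rule sum_mono)
  fix j assume "j \<in> {..d}"
  then have cj: "c j * q^j \<ge> 0" using nonneg q_bounds by auto
  have "(\<Sum>i<j. a'^(j - Suc i) * b'^i) \<le> (\<Sum>i<j. a^(j - Suc i) * b^i)"
    using assms by (intro sum_mono mult_mono power_mono) auto
  then show "c j * q ^ j * (\<Sum>i<j. a' ^ (j - Suc i) * b' ^ i)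
         \<le> c j * q ^ j * (\<Sum>i<j. a ^ (j - Suc i) * b ^ i)"
    using cj by (rule mult_left_mono)
qed

lemma S_nonneg: "0 \<le> a \<Longrightarrow> 0 \<le> b \<Longrightarrow> 0 \<le> S a b"
  unfolding sl_def using nonneg q_bounds
  by (intro sum_nonneg mult_nonneg_nonneg) auto

lemma S_gap: assumes "0 \<le> a'" "a' \<le> a" "0 \<le> b'" "b' \<le> b"
  shows "S a b - S a' b' \<ge> c j0 * q^j0 * (b^(j0-1) - b'^(j0-1))"
proof -
  define F where "F j = c j * q ^ j * ((\<Sum>i<j. a^(j - Suc i) * b^i) - (\<Sum>i<j. a'^(j - Suc i) * b'^i))" for j
  have eq: "S a b - S a' b' = (\<Sum>j\<le>d. F j)"
    unfolding sl_def F_def by (simp add: sum_subtractf algebra_simps)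
  have Fnn: "F j \<ge> 0" if "j \<le> d" for j
  proof -
    have "(\<Sum>i<j. a'^(j - Suc i) * b'^i) \<le> (\<Sum>i<j. a^(j - Suc i) * b^i)"
      using assms by (intro sum_mono mult_mono power_mono) auto
    then show ?thesis unfolding F_def using nonneg q_bounds that by auto
  qed
  have "F j0 \<le> (\<Sum>j\<le>d. F j)" using Fnn j0 by (intro member_le_sum) auto
  moreover have "c j0 * q^j0 * (b^(j0-1) - b'^(j0-1)) \<le> F j0"
  proof -
    define G where "G i = a^(j0 - Suc i) * b^i - a'^(j0 - Suc i) * b'^i" for i
    have "(\<Sum>i<j0. a^(j0 - Suc i) * b^i) - (\<Sum>i<j0. a'^(j0 - Suc i) * b'^i) = (\<Sum>i<j0. G i)"
      unfolding G_def by (simp add: sum_subtractf)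
    moreover have "G (j0 - 1) \<le> (\<Sum>i<j0. G i)"
      using j0 assms unfolding G_def
      by (intro member_le_sum) (auto intro!: mult_mono power_mono)
    moreover have "G (j0 - 1) = b^(j0-1) - b'^(j0-1)" unfolding G_def using j0 by simp
    ultimately show ?thesis unfolding F_def using nonneg j0 q_bounds
      by (intro mult_left_mono) auto
  qed
  ultimately show ?thesis using eq by linarith
qed

lemma S_pos: assumes "0 \<le> a" "0 < b" shows "0 < S a b"
proof -
  have h1: "S a b - S 0 0 \<ge> c j0 * q^j0 * (b^(j0-1) - 0^(j0-1))"
    using S_gap[of 0 a 0 b] assms by auto
  have h3: "(0::real)^(j0-1) = 0" using j0 by simp
  have h2: "S 0 0 \<ge> 0" using S_nonneg by auto
  have h4: "c j0 * q^j0 * b^(j0-1) > 0" using j0 q_bounds assms by simp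
  from h1 have "S a b - S 0 0 \<ge> c j0 * q^j0 * b^(j0-1)" by (simp only: h3 diff_zero)
  with h2 h4 show ?thesis by linarith
qed

lemma S_diag: assumes "0 \<le> A" "A \<le> 1"
  shows "S A A \<ge> (q*A)^d * branching d c"
proof -
  have "(q*A)^d * branching d c = (\<Sum>j\<le>d. real j * c j * (q*A)^d)"
    unfolding branching_def by (simp add: sum_distrib_left algebra_simps)
  also have "\<dots> \<le> S A A" unfolding sl_def
  proof (rule sum_mono)
    fix j assume j: "j \<in> {..d}"
    have qA: "0 \<le> q*A" "q*A \<le> 1" using q_bounds assms by (auto simp: mult_le_one)
    have "(\<Sum>i<j. A^j) \<le> (\<Sum>i<j. A^(j - Suc i) * A^i)"
    proof (rule sum_mono)
      fix i assume "i \<in> {..<j}"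
      then have "A^(j - Suc i) * A^i = A^(j - 1)" by (simp add: power_add[symmetric])
      moreover have "A^j \<le> A^(j-1)" using assms \<open>i \<in> {..<j}\<close> by (intro power_decreasing) auto
      ultimately show "A^j \<le> A^(j - Suc i) * A^i" by simp
    qed
    then have h: "real j * A^j \<le> (\<Sum>i<j. A^(j - Suc i) * A^i)" by simp
    have "real j * c j * (q*A)^d \<le> real j * c j * (q*A)^j"
      using j nonneg qA by (intro mult_left_mono power_decreasing) auto
    also have "\<dots> = c j * q^j * (real j * A^j)" by (simp add: power_mult_distrib algebra_simps)
    also have "\<dots> \<le> c j * q ^ j * (\<Sum>i<j. A ^ (j - Suc i) * A ^ i)"
      using h j nonneg q_bounds by (intro mult_left_mono) auto
    finally show "real j * c j * (q*A)^d \<le> c j * q ^ j * (\<Sum>i<j. A ^ (j - Suc i) * A ^ i)" .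
  qed
  finally show ?thesis .
qed


lemma ph_0: "ph 0 = 1" by (simp add: phi_def)
lemma ph_Suc: "ph (Suc i) = t (ph i)" by (simp add: phi_def)
lemma la_Suc: "la (Suc i) = ph i - ph (Suc i)" by (simp add: lam_def)

lemma ph_bounds: "0 < ph i \<and> ph i \<le> 1"
proof (induction i)
  case 0 then show ?case by (simp add: ph_0)
next
  case (Suc i) then show ?case using t_pos t_le1 by (simp add: ph_Suc)
qed

lemma la_rec: assumes "1 \<le> i" shows "la (Suc i) = S (ph i) (ph (i-1)) * la i"
proof -
  obtain m where m: "i = Suc m" using assms by (cases i) auto
  have "la (Suc i) = t (ph m) - t (ph (Suc m))" using m by (simp add: la_Suc ph_Suc)
  also have "\<dots> = S (ph (Suc m)) (ph m) * (ph m - ph (Suc m))" by (rule slope)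
  finally show ?thesis using m by (simp add: la_Suc)
qed

lemma la_pos: "1 \<le> i \<Longrightarrow> 0 < la i"
proof (induction i rule: dec_induct)
  case base then show ?case using t1_lt1 by (simp add: la_Suc ph_0 ph_Suc)
next
  case (step i)
  have "0 < S (ph i) (ph (i-1))" using ph_bounds by (intro S_pos) (auto simp: less_imp_le)
  then show ?case using step la_rec[of i] by simp
qed

lemma ph_dec: "ph (Suc i) < ph i"
  using la_pos[of "Suc i"] by (simp add: la_Suc)

lemma ph_anti: "i \<le> j \<Longrightarrow> ph j \<le> ph i"
proof (induction j rule: dec_induct)
  case base then show ?case by simp
next
  case (step j) then show ?case using ph_dec[of j] by simp
qed

lemma no_incr: assumes "\<forall>i\<ge>1. la i \<le> la (Suc i)" shows False
proof -
  have ge: "la 1 \<le> la i" if "1 \<le> i" for i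
    using that
  proof (induction i rule: dec_induct)
    case base then show ?case by simp
  next
    case (step i) then show ?case using assms by force
  qed
  have phb: "ph m \<le> 1 - real m * la 1" for m
  proof (induction m)
    case 0 then show ?case by (simp add: ph_0)
  next
    case (Suc m)
    have "ph (Suc m) = ph m - la (Suc m)" by (simp add: la_Suc)
    then show ?case using Suc ge[of "Suc m"] by (simp add: algebra_simps)
  qed
  obtain m where "1 < real m * la 1" using ex_less_of_nat_mult la_pos[of 1] by auto
  then show False using ph_bounds[of m] phb[of m] by linarith
qed

lemma pow_gap: fixes b b' :: real assumes "0 \<le> b'" "b' \<le> b" "1 \<le> m"
  shows "(b - b') * b^(m-1) \<le> b^m - b'^m"
proof -
  have "b^m - b'^m = (b - b') * (\<Sum>i<m. b'^(m - Suc i) * b^i)" by (rule power_diff_sumr2)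
  moreover have "b'^(m - Suc (m-1)) * b^(m-1) \<le> (\<Sum>i<m. b'^(m - Suc i) * b^i)"
    using assms by (intro member_le_sum) auto
  moreover have "b'^(m - Suc (m-1)) * b^(m-1) = b^(m-1)" using assms by simp
  ultimately have "b^(m-1) \<le> (\<Sum>i<m. b'^(m - Suc i) * b^i)" by simp
  then have "(b - b') * b^(m-1) \<le> (b - b') * (\<Sum>i<m. b'^(m - Suc i) * b^i)"
    using assms by (intro mult_left_mono) auto
  then show ?thesis using \<open>b^m - b'^m = _\<close> by simp
qed


lemma main:
  assumes A: "0 < A" "A < B" "B < 1" and rho: "1 < \<rho>" and SA: "\<rho> \<le> S A A"
    and kap: "\<kappa> = min ((1 - B) * (\<rho> - 1)) (B - A)"
    and del: "\<delta> = c j0 * (1/2)^j0 * \<kappa>^(j0-1)"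
  shows "\<exists>l1 ls::nat. 1 \<le> l1 \<and> l1 \<le> ls
      \<and> (\<forall>i. 2 \<le> i \<and> i \<le> ls \<longrightarrow> la (i - 1) \<le> la i)
      \<and> (\<forall>j\<ge>ls. la j > la (j + 1))
      \<and> (\<forall>i. 1 \<le> i \<and> i < l1 \<longrightarrow> la (i + 1) \<ge> \<rho> * la i)
      \<and> la l1 \<ge> \<kappa>
      \<and> real (ls - l1 + 1) * \<kappa> \<le> 1
      \<and> (\<forall>i\<ge>ls + 2. (\<Sum>k. la (i + k)) \<le> (1/\<delta>) * la i)"
proof -
  have kpos: "\<kappa> > 0" using A rho kap by auto
  have growth: "la (Suc i) \<ge> \<rho> * la i" if "1 \<le> i" "ph i > A" for i
  proof -
    have "ph i \<le> ph (i-1)" using ph_anti[of "i-1" i] by simp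
    then have "S A A \<le> S (ph i) (ph (i-1))" using that A by (intro S_mono) (auto simp: less_imp_le)
    then have "\<rho> * la i \<le> S (ph i) (ph (i-1)) * la i"
      using SA la_pos[OF that(1)] by (intro mult_right_mono) auto
    then show ?thesis using la_rec[OF that(1)] by simp
  qed
  have exA: "\<exists>i. ph i \<le> A"
  proof (rule ccontr)
    assume nA: "\<not> (\<exists>i. ph i \<le> A)"
    have "la i \<le> la (Suc i)" if "1 \<le> i" for i
    proof -
      have "ph i > A" using nA by (meson not_le)
      then have "la (Suc i) \<ge> \<rho> * la i" using growth that by auto
      moreover have "\<rho> * la i \<ge> la i" using rho la_pos[OF that] by simp
      ultimately show ?thesis by simp
    qed
    then have "\<forall>i\<ge>1. la i \<le> la (Suc i)" by auto
    then show False by (rule no_incr)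
  qed
  define l1 where "l1 = (LEAST i. ph i \<le> A)"
  have l1A: "ph l1 \<le> A" unfolding l1_def using exA by (rule LeastI_ex)
  have belowl1: "ph i > A" if "i < l1" for i
    using not_less_Least[of i "\<lambda>i. ph i \<le> A"] that unfolding l1_def by auto
  have l1pos: "1 \<le> l1"
  proof (rule ccontr)
    assume "\<not> 1 \<le> l1" then have "l1 = 0" by simp
    then show False using l1A A ph_0 by simp
  qed
  have exls: "\<exists>j. 1 \<le> j \<and> la (Suc j) < la j"
    using no_incr by (metis not_le)
  define ls where "ls = (LEAST j. 1 \<le> j \<and> la (Suc j) < la j)"
  have ls1: "1 \<le> ls" and lsdec: "la (Suc ls) < la ls"
    using LeastI_ex[OF exls] unfolding ls_def by auto
  have belowls: "la j \<le> la (Suc j)" if "1 \<le> j" "j < ls" for j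
    using not_less_Least[of j "\<lambda>j. 1 \<le> j \<and> la (Suc j) < la j"] that
    unfolding ls_def by auto
  have l1ls: "l1 \<le> ls"
  proof (rule ccontr)
    assume "\<not> l1 \<le> ls"
    then have "ph ls > A" using belowl1 by simp
    then have "la (Suc ls) \<ge> \<rho> * la ls" using growth ls1 by auto
    moreover have "\<rho> * la ls \<ge> la ls" using rho la_pos[OF ls1] by simp
    ultimately show False using lsdec by simp
  qed
  have Sls: "S (ph ls) (ph (ls-1)) < 1"
  proof -
    have "S (ph ls) (ph (ls-1)) * la ls < 1 * la ls" using lsdec la_rec[OF ls1] by simp
    then show ?thesis using la_pos[OF ls1] by (simp add: mult_less_cancel_right)
  qed
  have P1: "\<forall>i. 2 \<le> i \<and> i \<le> ls \<longrightarrow> la (i - 1) \<le> la i"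
  proof (intro allI impI)
    fix i assume "2 \<le> i \<and> i \<le> ls"
    then have "1 \<le> i - 1" "i - 1 < ls" "Suc (i - 1) = i" by auto
    then show "la (i - 1) \<le> la i" using belowls[of "i-1"] by simp
  qed
  have P2: "\<forall>j\<ge>ls. la j > la (j + 1)"
  proof (intro allI impI)
    fix j assume j: "ls \<le> j"
    then have j1: "1 \<le> j" using ls1 by simp
    have "S (ph j) (ph (j-1)) \<le> S (ph ls) (ph (ls-1))"
      using j ph_anti[of ls j] ph_anti[of "ls-1" "j-1"] ph_bounds
      by (intro S_mono) (auto simp: less_imp_le)
    then have "S (ph j) (ph (j-1)) < 1" using Sls by simp
    then have "S (ph j) (ph (j-1)) * la j < 1 * la j"
      using la_pos[OF j1] by (intro mult_strict_right_mono) auto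
    then show "la j > la (j + 1)" using la_rec[OF j1] by simp
  qed
  have P3: "\<forall>i. 1 \<le> i \<and> i < l1 \<longrightarrow> la (i + 1) \<ge> \<rho> * la i"
    using growth belowl1 by auto
  have P4: "la l1 \<ge> \<kappa>"
  proof -
    define x where "x = ph (l1 - 1)"
    have xA: "x > A" unfolding x_def using belowl1[of "l1-1"] l1pos by simp
    have x1: "x \<le> 1" "0 < x" unfolding x_def using ph_bounds by auto
    obtain m where m: "l1 = Suc m" using l1pos by (cases l1) auto
    have lax: "la l1 = x - t x" unfolding x_def m using la_Suc[of m] ph_Suc[of m] by simp
    have tx: "t x \<le> A" using l1A unfolding x_def m using ph_Suc[of m] by simp
    show ?thesis
    proof (cases "x \<le> B")
      case True
      have "t 1 - t x = S x 1 * (1 - x)" by (rule slope)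
      moreover have "S A A \<le> S x 1" using xA x1 A by (intro S_mono) auto
      moreover have "t 1 \<le> 1" using t1_lt1 by simp
      ultimately have h1: "t 1 - t x = S x 1 * (1 - x)" "\<rho> \<le> S x 1" "t 1 \<le> 1"
        using SA by auto
      have h2: "\<rho> * (1 - x) \<le> S x 1 * (1 - x)" using h1 x1 by (intro mult_right_mono) auto
      have h3: "(1 - x) * (\<rho> - 1) = \<rho> * (1 - x) - (1 - x)" by (simp add: algebra_simps)
      have "x - t x \<ge> (1 - x) * (\<rho> - 1)" using h1 h2 h3 by linarith
      moreover have "(1 - x) * (\<rho> - 1) \<ge> (1 - B) * (\<rho> - 1)"
        using True rho by (intro mult_right_mono) auto
      ultimately show ?thesis using lax kap by linarith
    next
      case False
      then show ?thesis using lax tx kap by linarith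
    qed
  qed
  have chain: "la i \<ge> la l1" if "l1 \<le> i" "i \<le> ls" for i
    using that
  proof (induction i rule: dec_induct)
    case base then show ?case by simp
  next
    case (step i)
    then show ?case using belowls[of i] l1pos by simp
  qed
  have cnt: "ph (l1 - 1) - ph (l1 + m) \<ge> real (m + 1) * \<kappa>" if "l1 + m \<le> ls" for m
    using that
  proof (induction m)
    case 0
    have "la l1 = ph (l1 - 1) - ph l1" by (simp add: lam_def)
    then show ?case using P4 by simp
  next
    case (Suc m)
    have "la (Suc (l1 + m)) = ph (l1 + m) - ph (Suc (l1 + m))" by (rule la_Suc)
    moreover have "la (Suc (l1 + m)) \<ge> \<kappa>" using chain[of "Suc (l1+m)"] Suc.prems P4 by simp
    ultimately show ?case using Suc by (simp add: algebra_simps)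
  qed
  have P5: "real (ls - l1 + 1) * \<kappa> \<le> 1"
    using cnt[of "ls - l1"] l1ls ph_bounds[of ls] ph_bounds[of "l1-1"] by simp
  have dpos: "\<delta> > 0" using del j0 kpos by simp
  have ratio: "S (ph i) (ph (i-1)) \<le> 1 - \<delta>" if "ls + 2 \<le> i" for i
  proof -
    define b where "b = ph (ls - 1)"
    define b' where "b' = ph (ls + 1)"
    have first: "S (ph i) (ph (i-1)) \<le> S b' b'"
      unfolding b'_def using that ph_anti[of "ls+1" i] ph_anti[of "ls+1" "i-1"] ph_bounds
      by (intro S_mono) (auto simp: less_imp_le)
    moreover have gap: "S (ph ls) b - S b' b' \<ge> c j0 * q^j0 * (b^(j0-1) - b'^(j0-1))"
      unfolding b_def b'_def using ph_bounds ph_anti[of ls "ls+1"] ph_anti[of "ls-1" "ls+1"]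
      by (intro S_gap) (auto simp: less_imp_le)
    moreover have "b - b' \<ge> \<kappa>"
    proof -
      have "la ls = b - ph ls" unfolding b_def by (simp add: lam_def)
      moreover have "la (Suc ls) = ph ls - b'" unfolding b'_def by (simp add: la_Suc)
      moreover have "la ls \<ge> \<kappa>" using chain[of ls] l1ls P4 by simp
      ultimately show ?thesis using la_pos[of "Suc ls"] by simp
    qed
    moreover have "b \<ge> \<kappa>"
    proof -
      have "la ls = b - ph ls" unfolding b_def by (simp add: lam_def)
      moreover have "la ls \<ge> \<kappa>" using chain[of ls] l1ls P4 by simp
      ultimately show ?thesis using ph_bounds[of ls] by simp
    qed
    moreover have "0 \<le> b'" "b' \<le> b" unfolding b_def b'_def using ph_bounds ph_anti[of "ls-1" "ls+1"]
      by (auto simp: less_imp_le)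
    ultimately have g2: "b^(j0-1) - b'^(j0-1) \<ge> \<kappa>^(j0-1)"
    proof -
      assume bb: "b - b' \<ge> \<kappa>" "b \<ge> \<kappa>" "0 \<le> b'" "b' \<le> b"
      have "(b - b') * b^(j0-1-1) \<le> b^(j0-1) - b'^(j0-1)" using bb j0 by (intro pow_gap) auto
      moreover have "\<kappa> * \<kappa>^(j0-1-1) \<le> (b - b') * b^(j0-1-1)"
        using bb kpos by (intro mult_mono power_mono) auto
      moreover have "\<kappa> * \<kappa>^(j0-1-1) = \<kappa>^(j0-1)"
      proof -
        have "j0 - 1 = Suc (j0-1-1)" using j0 by simp
        then show ?thesis by (metis power_Suc)
      qed
      ultimately show ?thesis by simp
    qed
    have "c j0 * q^j0 * (b^(j0-1) - b'^(j0-1)) \<ge> c j0 * (1/2)^j0 * \<kappa>^(j0-1)"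
      using g2 q_bounds j0 kpos by (intro mult_mono power_mono) auto
    moreover have "S (ph ls) b < 1" using Sls unfolding b_def .
    ultimately show ?thesis using gap del first by linarith
  qed
  have P6: "\<forall>i\<ge>ls + 2. (\<Sum>k. la (i + k)) \<le> (1/\<delta>) * la i"
  proof (intro allI impI)
    fix i assume i: "ls + 2 \<le> i"
    have d1: "0 \<le> 1 - \<delta>"
    proof -
      have "0 \<le> S (ph i) (ph (i-1))" using ph_bounds by (intro S_nonneg) (auto simp: less_imp_le)
      then show ?thesis using ratio[OF i] by simp
    qed
    have geo: "la (i + k) \<le> (1 - \<delta>)^k * la i" for k
    proof (induction k)
      case 0 then show ?case by simp
    next
      case (Suc k)
      have ik: "1 \<le> i + k" "ls + 2 \<le> i + k" using i by auto
      have "la (i + Suc k) = S (ph (i+k)) (ph (i+k-1)) * la (i+k)" using la_rec[OF ik(1)] by simp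
      also have "\<dots> \<le> (1 - \<delta>) * la (i + k)"
        using ratio[OF ik(2)] la_pos[OF ik(1)] by (intro mult_right_mono) auto
      also have "\<dots> \<le> (1 - \<delta>) * ((1 - \<delta>)^k * la i)" using Suc d1 by (intro mult_left_mono) auto
      finally show ?case by simp
    qed
    have gs: "(\<lambda>k. (1 - \<delta>)^k * la i) sums (1 / (1 - (1 - \<delta>)) * la i)"
      using d1 dpos by (intro sums_mult2 geometric_sums) auto
    have sm: "summable (\<lambda>k. la (i + k))"
    proof (rule summable_comparison_test')
      show "summable (\<lambda>k. (1 - \<delta>)^k * la i)" using gs by (rule sums_summable)
      fix k show "norm (la (i + k)) \<le> (1 - \<delta>)^k * la i"
        using geo[of k] la_pos[of "i+k"] i by simp
    qed
    have "(\<Sum>k. la (i + k)) \<le> 1 / (1 - (1 - \<delta>)) * la i"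
      by (rule sums_le[OF _ summable_sums[OF sm] gs]) (rule geo)
    then show "(\<Sum>k. la (i + k)) \<le> (1/\<delta>) * la i" by simp
  qed
  show ?thesis using l1pos l1ls P1 P2 P3 P4 P5 P6 by blast
qed

end

theorem lemma3p1:
  fixes d :: nat and c :: "nat \<Rightarrow> real"
  assumes nonneg: "\<forall>i\<le>d. c i \<ge> 0"
    and distr: "(\<Sum>i\<le>d. c i) = 1"
    and supercrit: "branching d c > 1"
  shows "\<exists>\<rho>>1. \<exists>\<gamma>>1. \<exists>\<kappa>>0. \<exists>K::nat.
    \<forall>\<^sub>F n in sequentially. \<exists>l1 ls::nat. 1 \<le> l1 \<and> l1 \<le> ls
      \<and> (\<forall>i. 2 \<le> i \<and> i \<le> ls \<longrightarrow> lam d c n (i - 1) \<le> lam d c n i)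
      \<and> (\<forall>j\<ge>ls. lam d c n j > lam d c n (j + 1))
      \<and> (\<forall>i. 1 \<le> i \<and> i < l1 \<longrightarrow> lam d c n (i + 1) \<ge> \<rho> * lam d c n i)
      \<and> lam d c n l1 \<ge> \<kappa>
      \<and> ls - l1 \<le> K
      \<and> (\<forall>i\<ge>ls + 2. (\<Sum>k. lam d c n (i + k)) \<le> \<gamma> * lam d c n i)"
proof -
  define b where "b = branching d c"
  have b1: "b > 1" using supercrit b_def by simp
  have "\<exists>j. 2 \<le> j \<and> j \<le> d \<and> c j > 0"
  proof (rule ccontr)
    assume H: "\<not> ?thesis"
    have "branching d c \<le> (\<Sum>i\<le>d. c i)" unfolding branching_def
    proof (rule sum_mono)
      fix i assume i: "i \<in> {..d}"
      show "real i * c i \<le> c i"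
      proof (cases "2 \<le> i")
        case True
        then have "c i = 0" using H i nonneg by (meson atMost_iff not_le order.not_eq_order_implies_strict)
        then show ?thesis by simp
      next
        case False
        then have "real i \<le> 1" by simp
        then show ?thesis using nonneg i by (simp add: mult_left_le_one_le)
      qed
    qed
    then show False using distr supercrit by simp
  qed
  then obtain j0 where j0: "2 \<le> j0" "j0 \<le> d" "c j0 > 0" by blast
  have d1: "real d \<ge> 1" using j0 by simp
  define e where "e = (b - 1) / (4 * b * real d)"
  have epos: "e > 0" unfolding e_def using b1 d1 by simp
  have ele: "e < 1"
  proof -
    have "b * 1 \<le> b * (4 * real d)" using b1 d1 by (intro mult_left_mono) auto
    then have "b - 1 < 4 * b * real d" by (simp add: mult.assoc)
    then show ?thesis unfolding e_def using b1 d1 by simp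
  qed
  define A where "A = 1 - e"
  define B where "B = 1 - e / 2"
  define \<rho> where "\<rho> = (b + 1) / 2"
  define \<kappa> where "\<kappa> = min ((1 - B) * (\<rho> - 1)) (B - A)"
  define \<delta> where "\<delta> = c j0 * (1/2)^j0 * \<kappa>^(j0-1)"
  define \<gamma> where "\<gamma> = 1 + 1 / \<delta>"
  define K where "K = nat \<lceil>1 / \<kappa>\<rceil>"
  define N where "N = max 2 (nat \<lceil>1 / e\<rceil>)"
  have rho1: "\<rho> > 1" unfolding \<rho>_def using b1 by simp
  have kpos: "\<kappa> > 0" unfolding \<kappa>_def B_def A_def using epos rho1 by simp
  have dpos: "\<delta> > 0" unfolding \<delta>_def using j0 kpos by simp
  have g1: "\<gamma> > 1" unfolding \<gamma>_def using dpos by simp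
  have ev: "\<forall>\<^sub>F n in sequentially. \<exists>l1 ls::nat. 1 \<le> l1 \<and> l1 \<le> ls
      \<and> (\<forall>i. 2 \<le> i \<and> i \<le> ls \<longrightarrow> lam d c n (i - 1) \<le> lam d c n i)
      \<and> (\<forall>j\<ge>ls. lam d c n j > lam d c n (j + 1))
      \<and> (\<forall>i. 1 \<le> i \<and> i < l1 \<longrightarrow> lam d c n (i + 1) \<ge> \<rho> * lam d c n i)
      \<and> lam d c n l1 \<ge> \<kappa>
      \<and> ls - l1 \<le> K
      \<and> (\<forall>i\<ge>ls + 2. (\<Sum>k. lam d c n (i + k)) \<le> \<gamma> * lam d c n i)"
    unfolding eventually_sequentially
  proof (rule exI[of _ N], intro allI impI)
    fix n assume nN: "N \<le> n"
    then have n2: "n \<ge> 2" unfolding N_def by simp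
    interpret G: gw d c n j0 using nonneg distr j0 n2 by unfold_locales auto
    have ninv: "1 / real n \<le> e"
    proof -
      have "1 / e \<le> real (nat \<lceil>1 / e\<rceil>)" by linarith
      also have "\<dots> \<le> real n" using nN unfolding N_def by simp
      finally have "1 / e \<le> real n" .
      then show ?thesis using epos n2 by (simp add: field_simps)
    qed
    have A01: "0 < A" "A < B" "B < 1" "0 \<le> A" "A \<le> 1" unfolding A_def B_def using epos ele by auto
    have q: "G.q = 1 - 1 / real n" by (rule G.q_def)
    have qA1: "1 - G.q * A \<le> 2 * e"
    proof -
      have "1 - G.q * A = (1 - G.q) + (1 - A) - (1 - G.q) * (1 - A)" by (simp add: algebra_simps)
      moreover have "(1 - G.q) * (1 - A) \<ge> 0" using G.q_bounds A01 by simp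
      moreover have "1 - G.q \<le> e" using q ninv by simp
      moreover have "1 - A = e" unfolding A_def by simp
      ultimately show ?thesis by linarith
    qed
    have qAge: "-1 \<le> G.q * A - 1" using G.q_bounds A01 by simp
    have bern: "1 + real d * (G.q * A - 1) \<le> (G.q * A)^d"
      using Bernoulli_inequality[OF qAge, of d] by simp
    have "real d * (1 - G.q * A) \<le> real d * (2 * e)" using qA1 by (intro mult_left_mono) auto
    also have "real d * (2 * e) = (b - 1) / (2 * b)" unfolding e_def using d1 b1 by (simp add: field_simps)
    finally have h: "real d * (1 - G.q * A) \<le> (b - 1) / (2 * b)" .
    have "real d * (G.q * A - 1) = - (real d * (1 - G.q * A))" by (simp add: algebra_simps)
    then have h2: "1 - (b - 1) / (2 * b) \<le> (G.q * A)^d" using bern h by linarith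
    have "(b + 1) / (2 * b) = 1 - (b - 1) / (2 * b)" using b1 by (simp add: field_simps)
    then have "(b + 1) / (2 * b) \<le> (G.q * A)^d" using h2 by simp
    then have "b * ((b + 1) / (2 * b)) \<le> b * (G.q * A)^d" using b1 by (intro mult_left_mono) auto
    moreover have "b * ((b + 1) / (2 * b)) = \<rho>" unfolding \<rho>_def using b1 by (simp add: field_simps)
    moreover have "G.S A A \<ge> (G.q * A)^d * b" using G.S_diag[OF A01(4,5)] b_def by simp
    ultimately have SA: "\<rho> \<le> G.S A A" by (simp add: mult.commute)
    obtain l1 ls where R: "1 \<le> l1 \<and> l1 \<le> ls
      \<and> (\<forall>i. 2 \<le> i \<and> i \<le> ls \<longrightarrow> lam d c n (i - 1) \<le> lam d c n i)
      \<and> (\<forall>j\<ge>ls. lam d c n j > lam d c n (j + 1))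
      \<and> (\<forall>i. 1 \<le> i \<and> i < l1 \<longrightarrow> lam d c n (i + 1) \<ge> \<rho> * lam d c n i)
      \<and> lam d c n l1 \<ge> \<kappa>
      \<and> real (ls - l1 + 1) * \<kappa> \<le> 1
      \<and> (\<forall>i\<ge>ls + 2. (\<Sum>k. lam d c n (i + k)) \<le> (1/\<delta>) * lam d c n i)"
      using G.main[OF A01(1,2,3) rho1 SA \<kappa>_def \<delta>_def] by blast
    have K: "ls - l1 \<le> K"
    proof -
      have "real (ls - l1 + 1) * \<kappa> \<le> 1" using R by blast
      then have "real (ls - l1 + 1) \<le> 1 / \<kappa>" using kpos by (simp add: pos_le_divide_eq)
      then have "real (ls - l1) \<le> 1 / \<kappa>" by simp
      then have "real (ls - l1) \<le> real (nat \<lceil>1 / \<kappa>\<rceil>)" by linarith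
      then show ?thesis unfolding K_def by linarith
    qed
    have T: "\<forall>i\<ge>ls + 2. (\<Sum>k. lam d c n (i + k)) \<le> \<gamma> * lam d c n i"
    proof (intro allI impI)
      fix i assume i: "ls + 2 \<le> i"
      have "0 < lam d c n i" using G.la_pos[of i] i by simp
      then have "(1/\<delta>) * lam d c n i \<le> \<gamma> * lam d c n i" unfolding \<gamma>_def by (intro mult_right_mono) auto
      then show "(\<Sum>k. lam d c n (i + k)) \<le> \<gamma> * lam d c n i" using R i by force
    qed
    show "\<exists>l1 ls::nat. 1 \<le> l1 \<and> l1 \<le> ls
      \<and> (\<forall>i. 2 \<le> i \<and> i \<le> ls \<longrightarrow> lam d c n (i - 1) \<le> lam d c n i)
      \<and> (\<forall>j\<ge>ls. lam d c n j > lam d c n (j + 1))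
      \<and> (\<forall>i. 1 \<le> i \<and> i < l1 \<longrightarrow> lam d c n (i + 1) \<ge> \<rho> * lam d c n i)
      \<and> lam d c n l1 \<ge> \<kappa>
      \<and> ls - l1 \<le> K
      \<and> (\<forall>i\<ge>ls + 2. (\<Sum>k. lam d c n (i + k)) \<le> \<gamma> * lam d c n i)"
      using R K T by blast
  qed
  show ?thesis using rho1 g1 kpos ev by blast
qed

end
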